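(* Fix $n\ge3$ and $M>0$ satisfying (A) and (B). In the environment $\Gamma^0$ there exists an SCF $f^*:V^n\to[0,1]$ that is anonymous and BIC in $\Gamma^0$ and satisfies $W^0(f^* )>W^0(f^{(n)})$.
   Context: Fix $n\ge 3$ agents $N=\{1,\dots,n\}$, choosing between Reform $R$ (agent $i$'s utility $v_i$) and Status quo $S$ (utility $0$). Let $M>0$ satisfy (A): $\frac{2}{n}\left[-M^2+M+n-2\right]+\frac{n-2}{n}\left[2M+n-4\right]<0$, and (B): $2M-(n-2)>0$. Let $V=\{-M^2,-1,1,M\}$. For $\epsilon\in[0,1/4]$, the environment $\Gamma^\epsilon$ has independent values $\tilde v_1,\dots,\tilde v_n$ with distributions: for agents $1,2$: $\Pr(-M^2)=0.5-\epsilon$, $\Pr(-1)=\epsilon$, $\Pr(1)=\epsilon$, $\Pr(M)=0.5-\epsilon$; for agents $3,\dots,n$: $\Pr(-M^2)=\epsilon$, $\Pr(-1)=0.5-\epsilon$, $\Pr(1)=0.5-\epsilon$, $\Pr(M)=\epsilon$. (In particular, in $\Gamma^0$ agents 1,2 take values in $\{-M^2,M\}$ and agents $3,\dots,n$ in $\{-1,1\}$, each with probability $1/2$.) An SCF is any $f:V^n\to[0,1]$, defined on all of $V^n$ (including zero-probability profiles). $f$ is anonymous if $f(v)=f(\pi v)$ for all $v\in V^n$ and permutations $\pi$ of $N$, where $\pi v=(v_{\pi(1)},\dots,v_{\pi(n)})$. $f$ is BIC in $\Gamma^\epsilon$ if for every agent $i$ and all reports $v_i,v_i'\in V$: $v_i\,\mathbb{E}^\epsilon(f(v_i,\tilde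 v_{-i}))\ge v_i\,\mathbb{E}^\epsilon(f(v_i',\tilde v_{-i}))$, expectation over $\tilde v_{-i}$ under $\Gamma^\epsilon$. For $v\in V^n$, $\chi(v)=\{i: v_i>0\}$; the unanimity rule is $f^{(n)}(v)=1$ if $|\chi(v)|=n$ and $0$ otherwise. $W^\epsilon(f)=\mathbb{E}^\epsilon\big(f(\tilde v)\sum_i\tilde v_i\big)$. *)

theory Defs
  imports Complex_Main "HOL-Combinatorics.Permutations"
begin

text \<open>Agents are indexed 0,...,n-1 (paper's agents 1,2 are 0,1 here).
A profile is an extensional function in PiE {..<n} (\<lambda>_. V).\<close>

definition Vals :: "real \<Rightarrow> real set" where
  "Vals M = {-(M^2), -1, 1, M}"

definition profiles :: "nat \<Rightarrow> real \<Rightarrow> (nat \<Rightarrow> real) set" where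
  "profiles n M = PiE {..<n} (\<lambda>_. Vals M)"

definition gamma_pr :: "real \<Rightarrow> real \<Rightarrow> nat \<Rightarrow> real \<Rightarrow> real" where
  "gamma_pr M eps i x =
     (if i < 2 then
        (if x = -(M^2) then 1/2 - eps else if x = -1 then eps
         else if x = 1 then eps else if x = M then 1/2 - eps else 0)
      else
        (if x = -(M^2) then eps else if x = -1 then 1/2 - eps
         else if x = 1 then 1/2 - eps else if x = M then eps else 0))"

definition interim :: "nat \<Rightarrow> real \<Rightarrow> real \<Rightarrow> ((nat \<Rightarrow> real) \<Rightarrow> real) \<Rightarrow> nat \<Rightarrow> real \<Rightarrow> real" where
  "interim n M eps f i vi =
     (\<Sum>w \<in> PiE ({..<n} - {i}) (\<lambda>_. Vals M).
        (\<Prod>j \<in> {..<n} - {i}. gamma_pr M eps j (w j)) * f (w(i := vi)))"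

definition is_SCF :: "nat \<Rightarrow> real \<Rightarrow> ((nat \<Rightarrow> real) \<Rightarrow> real) \<Rightarrow> bool" where
  "is_SCF n M f \<longleftrightarrow> (\<forall>v \<in> profiles n M. 0 \<le> f v \<and> f v \<le> 1)"

definition anonymous :: "nat \<Rightarrow> real \<Rightarrow> ((nat \<Rightarrow> real) \<Rightarrow> real) \<Rightarrow> bool" where
  "anonymous n M f \<longleftrightarrow>
     (\<forall>v \<in> profiles n M. \<forall>\<pi>. \<pi> permutes {..<n} \<longrightarrow> f (v \<circ> \<pi>) = f v)"

definition BIC :: "nat \<Rightarrow> real \<Rightarrow> real \<Rightarrow> ((nat \<Rightarrow> real) \<Rightarrow> real) \<Rightarrow> bool" where
  "BIC n M eps f \<longleftrightarrow>
     (\<forall>i < n. \<forall>vi \<in> Vals M. \<forall>vi' \<in> Vals M.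
        vi * interim n M eps f i vi \<ge> vi * interim n M eps f i vi')"

definition unanimity :: "nat \<Rightarrow> (nat \<Rightarrow> real) \<Rightarrow> real" where
  "unanimity n v = (if card {i \<in> {..<n}. v i > 0} = n then 1 else 0)"

definition welfare :: "nat \<Rightarrow> real \<Rightarrow> real \<Rightarrow> ((nat \<Rightarrow> real) \<Rightarrow> real) \<Rightarrow> real" where
  "welfare n M eps f =
     (\<Sum>v \<in> profiles n M. (\<Prod>j<n. gamma_pr M eps j (v j)) * (f v * (\<Sum>j<n. v j)))"

end

theory Submission
  imports Defs
begin

definition Bg :: "real \<Rightarrow> real set" where "Bg M = {-(M^2), M}"
definition Sm :: "real set" where "Sm = {-1, 1}"
definition supp :: "real \<Rightarrow> nat \<Rightarrow> real set" where "supp M j = (if j < 2 then Bg M else Sm)"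
definition SS :: "nat \<Rightarrow> real \<Rightarrow> nat \<Rightarrow> (nat \<Rightarrow> real) set" where
  "SS n M i = PiE ({..<n} - {i}) (supp M)"
definition cnt :: "nat \<Rightarrow> (nat \<Rightarrow> real) \<Rightarrow> real \<Rightarrow> nat" where
  "cnt n u x = (\<Sum>j<n. if u j = x then 1 else 0)"
definition FF :: "real \<Rightarrow> nat \<Rightarrow> nat \<Rightarrow> nat \<Rightarrow> real" where
  "FF q a b c = (if b = 0 \<and> c = 0 \<and> a \<in> {1,2,3} then 1
     else if a = 0 \<and> b = 1 \<and> c = 0 then 1
     else if b = 0 \<and> c = 1 \<and> a \<in> {2,3} then q
     else if a = 0 \<and> b = 3 \<and> c = 0 then q else 0)"
definition fstar :: "nat \<Rightarrow> real \<Rightarrow> (nat \<Rightarrow> real) \<Rightarrow> real" where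
  "fstar n M u = FF (1 / real (n - 2)) (cnt n u M) (cnt n u (-(M^2))) (cnt n u (-1))"

lemma gamma0:
  assumes "M > 0" "M \<noteq> 1"
  shows "gamma_pr M 0 j x = (if x \<in> supp M j then 1/2 else 0)"
proof -
  have "M^2 \<noteq> 1" using assms by (metis abs_of_pos power2_eq_1_iff zero_less_one_class.zero_le_one abs_neg_one abs_one less_irrefl neg_0_less_iff_less not_one_less_zero)
  moreover have "M^2 \<noteq> -1" by (smt (verit) zero_le_power2)
  ultimately show ?thesis using assms by (auto simp: gamma_pr_def supp_def Bg_def Sm_def)
qed

lemma supp_Vals: "supp M j \<subseteq> Vals M"
  by (auto simp: supp_def Bg_def Sm_def Vals_def)

lemma interim_red:
  assumes "i < n" "M > 0" "M \<noteq> 1"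
  shows "interim n M 0 f i vi = (1/2)^(n-1) * (\<Sum>w\<in>SS n M i. f (w(i := vi)))"
proof -
  let ?D = "{..<n} - {i}"
  have cD: "card ?D = n - 1" using assms by simp
  have P: "(\<Prod>j\<in>?D. gamma_pr M 0 j (w j)) = (if w \<in> SS n M i then (1/2)^(n-1) else 0)"
    if wP: "w \<in> PiE ?D (\<lambda>_. Vals M)" for w
  proof (cases "w \<in> SS n M i")
    case True
    then have "\<forall>j\<in>?D. w j \<in> supp M j" by (auto simp: SS_def)
    then have "(\<Prod>j\<in>?D. gamma_pr M 0 j (w j)) = (\<Prod>j\<in>?D. 1/2)"
      using assms by (intro prod.cong) (auto simp: gamma0)
    then show ?thesis using True cD by simp
  next
    case False
    then obtain j where "j \<in> ?D" "w j \<notin> supp M j" using wP False by (auto simp: SS_def PiE_iff)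
    then have "gamma_pr M 0 j (w j) = 0" using assms by (simp add: gamma0)
    then have "(\<Prod>j\<in>?D. gamma_pr M 0 j (w j)) = 0"
      using \<open>j \<in> ?D\<close> by (intro prod_zero) auto
    then show ?thesis using False by simp
  qed
  have sub: "SS n M i \<subseteq> PiE ?D (\<lambda>_. Vals M)"
    using supp_Vals unfolding SS_def by (auto simp: PiE_def Pi_def)
  have "interim n M 0 f i vi = (\<Sum>w\<in>PiE ?D (\<lambda>_. Vals M). (if w \<in> SS n M i then (1/2)^(n-1) else 0) * f (w(i := vi)))"
    unfolding interim_def by (intro sum.cong) (auto simp: P)
  also have "\<dots> = (\<Sum>w\<in>SS n M i. (1/2)^(n-1) * f (w(i := vi)))"
    by (rule sum.mono_neutral_cong_right) (use sub in \<open>auto simp: Vals_def intro!: finite_PiE\<close>)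
  also have "\<dots> = (1/2)^(n-1) * (\<Sum>w\<in>SS n M i. f (w(i := vi)))"
    by (simp add: sum_distrib_left)
  finally show ?thesis .
qed

lemma welfare_red:
  assumes "M > 0" "M \<noteq> 1"
  shows "welfare n M 0 g = (1/2)^n * (\<Sum>v\<in>PiE {..<n} (supp M). g v * (\<Sum>j<n. v j))"
proof -
  let ?S = "PiE {..<n} (supp M)"
  have P: "(\<Prod>j<n. gamma_pr M 0 j (w j)) = (if w \<in> ?S then (1/2)^n else 0)"
    if wP: "w \<in> profiles n M" for w
  proof (cases "w \<in> ?S")
    case True
    then have "\<forall>j\<in>{..<n}. w j \<in> supp M j" by auto
    then have "(\<Prod>j<n. gamma_pr M 0 j (w j)) = (\<Prod>j<n. 1/2)"
      using assms by (intro prod.cong) (auto simp: gamma0)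
    then show ?thesis using True by simp
  next
    case False
    then obtain j where "j \<in> {..<n}" "w j \<notin> supp M j" using wP False by (auto simp: profiles_def PiE_iff)
    then have "gamma_pr M 0 j (w j) = 0" using assms by (simp add: gamma0)
    then have "(\<Prod>j<n. gamma_pr M 0 j (w j)) = 0"
      using \<open>j \<in> {..<n}\<close> by (intro prod_zero) auto
    then show ?thesis using False by simp
  qed
  have sub: "?S \<subseteq> profiles n M"
    using supp_Vals unfolding profiles_def by (auto simp: PiE_def Pi_def)
  have "welfare n M 0 g = (\<Sum>w\<in>profiles n M. (if w \<in> ?S then (1/2)^n else 0) * (g w * (\<Sum>j<n. w j)))"
    unfolding welfare_def by (intro sum.cong) (auto simp: P)
  also have "\<dots> = (\<Sum>w\<in>?S. (1/2)^n * (g w * (\<Sum>j<n. w j)))"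
    by (rule sum.mono_neutral_cong_right) (use sub in \<open>auto simp: Vals_def profiles_def intro!: finite_PiE\<close>)
  also have "\<dots> = (1/2)^n * (\<Sum>v\<in>?S. g v * (\<Sum>j<n. v j))"
    by (simp add: sum_distrib_left)
  finally show ?thesis .
qed

lemma cnt_upd:
  assumes "i < n" "n \<ge> 2"
  shows "cnt n (w(i := vi)) x = (if vi = x then 1 else 0) + (\<Sum>j\<in>{..<2} - {i}. if w j = x then 1 else 0)
          + (\<Sum>j\<in>{2..<n} - {i}. if w j = x then 1 else 0)"
proof -
  have e: "{..<n} = insert i (({..<2} - {i}) \<union> ({2..<n} - {i}))" using assms by auto
  have s1: "(\<Sum>j\<in>{..<2} - {i}. if (w(i := vi)) j = x then 1 else (0::nat)) = (\<Sum>j\<in>{..<2} - {i}. if w j = x then 1 else 0)"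
    by (intro sum.cong) auto
  have s2: "(\<Sum>j\<in>{2..<n} - {i}. if (w(i := vi)) j = x then 1 else (0::nat)) = (\<Sum>j\<in>{2..<n} - {i}. if w j = x then 1 else 0)"
    by (intro sum.cong) auto
  have d: "({..<2} - {i}) \<inter> ({2..<n} - {i}) = {}" by auto
  show ?thesis
    unfolding cnt_def e
    apply (subst sum.insert)
      apply simp
     apply simp
    apply (subst sum.union_disjoint[OF _ _ d])
      apply simp
     apply simp
    apply (simp only: s1 s2)
    apply simp
    done
qed
definition kk :: "nat \<Rightarrow> (nat \<Rightarrow> real) \<Rightarrow> nat \<Rightarrow> nat" where
  "kk n w i = (\<Sum>j\<in>{2..<n} - {i}. if w j = -1 then 1 else 0)"

lemma distinct_vals:
  fixes M :: real
  assumes "M > 0" "M \<noteq> 1"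
  shows "M \<noteq> -(M^2)" "M \<noteq> -1" "M \<noteq> 1" "-(M^2) \<noteq> -1" "-(M^2) \<noteq> 1" "-(M^2) \<noteq> M" "-1 \<noteq> M" "1 \<noteq> M"
    "-1 \<noteq> -(M^2)" "1 \<noteq> -(M^2)"
proof -
  have h1: "M^2 \<noteq> 1"
  proof
    assume "M^2 = 1"
    then have "(M - 1) * (M + 1) = 0" by (simp add: algebra_simps power2_eq_square)
    then show False using assms by simp
  qed
  have h2: "M^2 > 0" using assms by simp
  show "M \<noteq> -(M^2)" "-(M^2) \<noteq> M" using h2 assms by linarith+
  show "M \<noteq> -1" "-1 \<noteq> M" using assms by linarith+
  show "M \<noteq> 1" "1 \<noteq> M" using assms by linarith+
  show "-(M^2) \<noteq> -1" "-1 \<noteq> -(M^2)" using h1 by linarith+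
  show "-(M^2) \<noteq> 1" "1 \<noteq> -(M^2)" using h2 by linarith+
qed

lemma SS_mem:
  assumes "w \<in> SS n M i" "j < n" "j \<noteq> i"
  shows "w j \<in> supp M j"
  using assms by (auto simp: SS_def)

lemma big_zero:
  assumes "w \<in> SS n M i" "x \<in> Bg M" "M > 0" "M \<noteq> 1"
  shows "(\<Sum>j\<in>{2..<n} - {i}. if w j = x then (1::nat) else 0) = 0"
proof -
  have "w j \<noteq> x" if "j \<in> {2..<n} - {i}" for j
    using SS_mem[OF assms(1), of j] that assms(2) distinct_vals[OF assms(3,4)]
    by (auto simp: supp_def Sm_def Bg_def)
  then show ?thesis by simp
qed

lemma small_zero:
  assumes "w \<in> SS n M i" "M > 0" "M \<noteq> 1" "n \<ge> 2"
  shows "(\<Sum>j\<in>{..<2} - {i}. if w j = -1 then (1::nat) else 0) = 0"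
proof -
  have "w j \<noteq> -1" if "j \<in> {..<2} - {i}" for j
    using SS_mem[OF assms(1), of j] that distinct_vals[OF assms(2,3)] assms(4)
    by (auto simp: supp_def Sm_def Bg_def)
  then show ?thesis by simp
qed

context
  fixes n :: nat and M :: real
  assumes n3: "n \<ge> 3" and Mpos: "M > 0" and M1: "M \<noteq> 1"
begin

lemmas dv = distinct_vals[OF Mpos M1]

lemma Msq: "M^2 \<noteq> 1" "M^2 \<noteq> -1"
proof -
  show "M^2 \<noteq> 1" using dv(4) by linarith
  show "M^2 \<noteq> -1" by (smt (verit) zero_le_power2)
qed

lemma cnt_ge2:
  assumes "2 \<le> i" "i < n" "w \<in> SS n M i" "x \<in> Bg M"
  shows "cnt n (w(i:=vi)) x = (if vi = x then 1 else 0) + (if w 0 = x then 1 else 0) + (if w 1 = x then 1 else 0)"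
proof -
  have "{..<2} - {i} = {0, 1::nat}" using assms by auto
  then show ?thesis using cnt_upd[of i n w vi x] big_zero[OF assms(3,4) Mpos M1] assms n3 by simp
qed

lemma cnt_ge2m:
  assumes "2 \<le> i" "i < n" "w \<in> SS n M i"
  shows "cnt n (w(i:=vi)) (-1) = (if vi = -1 then 1 else 0) + kk n w i"
  using cnt_upd[of i n w vi "-1"] small_zero[OF assms(3) Mpos M1] assms n3 by (simp add: kk_def)

lemma cnt_lt2:
  assumes "i < 2" "w \<in> SS n M i" "x \<in> Bg M"
  shows "cnt n (w(i:=vi)) x = (if vi = x then 1 else 0) + (if w (1 - i) = x then 1 else 0)"
proof -
  have "{..<2} - {i} = {1 - i}" using assms by (auto simp: less_2_cases_iff)
  then show ?thesis using cnt_upd[of i n w vi x] big_zero[OF assms(2,3) Mpos M1] assms n3 by simp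
qed

lemma cnt_lt2m:
  assumes "i < 2" "w \<in> SS n M i"
  shows "cnt n (w(i:=vi)) (-1) = (if vi = -1 then 1 else 0) + kk n w i"
  using cnt_upd[of i n w vi "-1"] small_zero[OF assms(2) Mpos M1] assms n3 by (simp add: kk_def)

lemma w_big:
  assumes "w \<in> SS n M i" "j < 2" "j \<noteq> i"
  shows "w j = M \<or> w j = -(M^2)"
  using SS_mem[OF assms(1), of j] assms n3 by (auto simp: supp_def Bg_def)

lemma Bg_simps: "M \<in> Bg M" "-(M^2) \<in> Bg M" by (auto simp: Bg_def)

abbreviation "q \<equiv> 1 / real (n - 2)"

lemma P1:
  assumes "2 \<le> i" "i < n" "w \<in> SS n M i"
  shows "fstar n M (w(i:=M)) = fstar n M (w(i:=1))"
proof -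
  have a: "w 0 = M \<or> w 0 = -(M^2)" "w 1 = M \<or> w 1 = -(M^2)" using w_big[OF assms(3)] assms by auto
  show ?thesis using a unfolding fstar_def
    by (elim disjE) (simp_all add: cnt_ge2[OF assms] cnt_ge2m[OF assms] Bg_simps dv Msq FF_def)
qed

lemma P2:
  assumes "2 \<le> i" "i < n" "w \<in> SS n M i"
  shows "fstar n M (w(i:=-1)) = (if w 0 = M \<and> w 1 = M \<and> kk n w i = 0 then q else 0)"
proof -
  have a: "w 0 = M \<or> w 0 = -(M^2)" "w 1 = M \<or> w 1 = -(M^2)" using w_big[OF assms(3)] assms by auto
  show ?thesis using a unfolding fstar_def
    by (elim disjE) (simp_all add: cnt_ge2[OF assms] cnt_ge2m[OF assms] Bg_simps dv Msq FF_def)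
qed

lemma P3:
  assumes "2 \<le> i" "i < n" "w \<in> SS n M i"
  shows "fstar n M (w(i:=-(M^2))) = (if w 0 = -(M^2) \<and> w 1 = -(M^2) \<and> kk n w i = 0 then q else 0)"
proof -
  have a: "w 0 = M \<or> w 0 = -(M^2)" "w 1 = M \<or> w 1 = -(M^2)" using w_big[OF assms(3)] assms by auto
  show ?thesis using a unfolding fstar_def
    by (elim disjE) (simp_all add: cnt_ge2[OF assms] cnt_ge2m[OF assms] Bg_simps dv Msq FF_def)
qed

lemma P4:
  assumes "i < 2" "w \<in> SS n M i"
  shows "fstar n M (w(i:=-1)) = 0" "fstar n M (w(i:=-(M^2))) = 0"
proof -
  have a: "w (1 - i) = M \<or> w (1 - i) = -(M^2)" 
  proof -
    have "1 - i < 2" "1 - i \<noteq> i" using assms(1) by (auto simp: less_2_cases_iff)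
    then show ?thesis using w_big[OF assms(2)] by blast
  qed
  show "fstar n M (w(i:=-1)) = 0" using a unfolding fstar_def
    by (elim disjE) (simp_all add: cnt_lt2[OF assms] cnt_lt2m[OF assms] Bg_simps dv Msq FF_def)
  show "fstar n M (w(i:=-(M^2))) = 0" using a unfolding fstar_def
    by (elim disjE) (simp_all add: cnt_lt2[OF assms] cnt_lt2m[OF assms] Bg_simps dv Msq FF_def)
qed

lemma P5:
  assumes "i < 2" "w \<in> SS n M i"
  shows "fstar n M (w(i:=1)) = (if kk n w i = 0 then 1 else 0)"
proof -
  have a: "w (1 - i) = M \<or> w (1 - i) = -(M^2)" 
  proof -
    have "1 - i < 2" "1 - i \<noteq> i" using assms(1) by (auto simp: less_2_cases_iff)
    then show ?thesis using w_big[OF assms(2)] by blast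
  qed
  show ?thesis using a unfolding fstar_def
    by (elim disjE) (simp_all add: cnt_lt2[OF assms] cnt_lt2m[OF assms] Bg_simps dv Msq FF_def)
qed

lemma P6:
  assumes "i < 2" "w \<in> SS n M i"
  shows "fstar n M (w(i:=M)) = (if w (1 - i) = M \<and> kk n w i = 0 then 1 else if w (1 - i) = M \<and> kk n w i = 1 then q else 0)"
proof -
  have a: "w (1 - i) = M \<or> w (1 - i) = -(M^2)" 
  proof -
    have "1 - i < 2" "1 - i \<noteq> i" using assms(1) by (auto simp: less_2_cases_iff)
    then show ?thesis using w_big[OF assms(2)] by blast
  qed
  show ?thesis using a unfolding fstar_def
    by (elim disjE) (simp_all add: cnt_lt2[OF assms] cnt_lt2m[OF assms] Bg_simps dv Msq FF_def)
qed


lemma P7: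
  assumes "2 \<le> i" "i < n" "w \<in> SS n M i"
  shows "fstar n M (w(i:=1)) = (if w 0 = M \<and> w 1 = M \<and> kk n w i = 0 then 1 else if w 0 = M \<and> w 1 = M \<and> kk n w i = 1 then q else 0)"
proof -
  have a: "w 0 = M \<or> w 0 = -(M^2)" "w 1 = M \<or> w 1 = -(M^2)" using w_big[OF assms(3)] assms by auto
  show ?thesis using a unfolding fstar_def
    by (elim disjE) (simp_all add: cnt_ge2[OF assms] cnt_ge2m[OF assms] Bg_simps dv Msq FF_def)
qed

lemma q_pos: "0 < q" "q \<le> 1" using n3 by auto

lemma fstar_bounds: "0 \<le> fstar n M u" "fstar n M u \<le> 1"
  using q_pos unfolding fstar_def FF_def by auto

definition mk :: "nat \<Rightarrow> real \<Rightarrow> nat \<Rightarrow> real" where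
  "mk i b = (\<lambda>j. if j \<in> {..<n} - {i} then (if j < 2 then b else 1) else undefined)"

lemma kk_card: "kk n w i = card {j\<in>{2..<n} - {i}. w j = -1}"
  by (simp add: kk_def sum.inter_filter[symmetric])

lemma mk_in: "b \<in> Bg M \<Longrightarrow> mk i b \<in> SS n M i"
  unfolding SS_def PiE_iff extensional_def by (auto simp: mk_def supp_def Sm_def)

lemma mk_kk: "kk n (mk i b) i = 0"
  unfolding kk_def mk_def by (intro sum.neutral) auto

lemma mk_big: "j < 2 \<Longrightarrow> j \<noteq> i \<Longrightarrow> mk i b j = b"
  using n3 by (auto simp: mk_def)

lemma mk_uniq:
  assumes "w \<in> SS n M i" "kk n w i = 0" "\<And>j. j < 2 \<Longrightarrow> j \<noteq> i \<Longrightarrow> w j = b"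
  shows "w = mk i b"
proof
  fix j
  have nz: "\<forall>j\<in>{2..<n} - {i}. w j \<noteq> -1" using assms(2) unfolding kk_def
    by (subst (asm) sum_eq_0_iff) (auto split: if_splits)
  show "w j = mk i b j"
  proof (cases "j \<in> {..<n} - {i}")
    case True
    then show ?thesis
    proof (cases "j < 2")
      case True then show ?thesis using assms(3) \<open>j \<in> {..<n} - {i}\<close> by (auto simp: mk_def)
    next
      case False
      then have "w j \<in> Sm" using SS_mem[OF assms(1), of j] \<open>j \<in> {..<n} - {i}\<close> by (auto simp: supp_def)
      then show ?thesis using nz False \<open>j \<in> {..<n} - {i}\<close> by (auto simp: Sm_def mk_def)
    qed
  next
    case False
    then show ?thesis using assms(1) by (auto simp: mk_def SS_def PiE_def extensional_def)
  qed
qed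

lemma mk_distinct: "i < 2 \<Longrightarrow> mk i M \<noteq> mk i (-(M^2))"
proof
  assume "i < 2" "mk i M = mk i (-(M^2))"
  then have "mk i M (1 - i) = mk i (-(M^2)) (1 - i)" by simp
  moreover have "1 - i < 2" "1 - i \<noteq> i" using \<open>i < 2\<close> by (auto simp: less_2_cases_iff)
  ultimately show False using mk_big dv by metis
qed


lemma fin_SS: "finite (SS n M i)"
  unfolding SS_def by (rule finite_PiE) (auto simp: supp_def Bg_def Sm_def)

lemma ge2_iff:
  assumes "2 \<le> i" "i < n" "w \<in> SS n M i" "b \<in> Bg M"
  shows "(w 0 = b \<and> w 1 = b \<and> kk n w i = 0) \<longleftrightarrow> w = mk i b"
proof
  assume h: "w 0 = b \<and> w 1 = b \<and> kk n w i = 0"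
  show "w = mk i b"
  proof (rule mk_uniq[OF assms(3)])
    show "kk n w i = 0" using h by simp
    fix j assume "j < 2" "j \<noteq> i"
    then show "w j = b" using h by (auto simp: less_2_cases_iff)
  qed
next
  assume "w = mk i b"
  then show "w 0 = b \<and> w 1 = b \<and> kk n w i = 0" using assms mk_big mk_kk by auto
qed

lemma sum_ge2_neg:
  assumes "2 \<le> i" "i < n"
  shows "(\<Sum>w\<in>SS n M i. fstar n M (w(i:=-1))) = q" "(\<Sum>w\<in>SS n M i. fstar n M (w(i:=-(M^2)))) = q"
proof -
  have "(\<Sum>w\<in>SS n M i. fstar n M (w(i:=-1))) = (\<Sum>w\<in>SS n M i. if w = mk i M then q else 0)"
  proof (intro sum.cong refl)
    fix w assume w: "w \<in> SS n M i"
    show "fstar n M (w(i:=-1)) = (if w = mk i (M) then q else 0)"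
      using P2[OF assms w] ge2_iff[OF assms w Bg_simps(1)] by auto
  qed
  also have "\<dots> = q" using mk_in[OF Bg_simps(1)] fin_SS by simp
  finally show "(\<Sum>w\<in>SS n M i. fstar n M (w(i:=-1))) = q" .
  have "(\<Sum>w\<in>SS n M i. fstar n M (w(i:=-(M^2)))) = (\<Sum>w\<in>SS n M i. if w = mk i (-(M^2)) then q else 0)"
  proof (intro sum.cong refl)
    fix w assume w: "w \<in> SS n M i"
    show "fstar n M (w(i:=-(M^2))) = (if w = mk i (-(M^2)) then q else 0)"
      using P3[OF assms w] ge2_iff[OF assms w Bg_simps(2)] by auto
  qed
  also have "\<dots> = q" using mk_in[OF Bg_simps(2)] fin_SS by simp
  finally show "(\<Sum>w\<in>SS n M i. fstar n M (w(i:=-(M^2)))) = q" .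
qed

lemma sum_ge2_pos:
  assumes "2 \<le> i" "i < n"
  shows "(\<Sum>w\<in>SS n M i. fstar n M (w(i:=1))) \<ge> 1"
proof -
  have "fstar n M ((mk i M)(i:=1)) = 1"
    using P7[OF assms mk_in[OF Bg_simps(1)]] ge2_iff[OF assms mk_in[OF Bg_simps(1)] Bg_simps(1)] by simp
  moreover have "fstar n M ((mk i M)(i:=1)) \<le> (\<Sum>w\<in>SS n M i. fstar n M (w(i:=1)))"
    by (rule member_le_sum) (auto simp: fstar_bounds fin_SS mk_in Bg_simps)
  ultimately show ?thesis by simp
qed

lemma lt2_other: "(i::nat) < 2 \<Longrightarrow> j < 2 \<Longrightarrow> j \<noteq> i \<Longrightarrow> j = 1 - i"
  by (auto simp: less_2_cases_iff)

lemma lt2_iff: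
  assumes "i < 2" "w \<in> SS n M i"
  shows "(w (1 - i) = b \<and> kk n w i = 0) \<longleftrightarrow> w = mk i b"
proof
  assume h: "w (1 - i) = b \<and> kk n w i = 0"
  show "w = mk i b"
  proof (rule mk_uniq[OF assms(2)])
    show "kk n w i = 0" using h by simp
    fix j assume "j < 2" "j \<noteq> i"
    then show "w j = b" using h lt2_other[OF assms(1)] by auto
  qed
next
  assume "w = mk i b"
  moreover have "1 - i < 2" "1 - i \<noteq> i" using assms(1) by (auto simp: less_2_cases_iff)
  ultimately show "w (1 - i) = b \<and> kk n w i = 0" using mk_big mk_kk by auto
qed

lemma sum_lt2_one:
  assumes "i < 2"
  shows "(\<Sum>w\<in>SS n M i. fstar n M (w(i:=1))) = 2"
proof -
  have "fstar n M (w(i:=1)) = (if w = mk i M then 1 else 0) + (if w = mk i (-(M^2)) then 1 else 0)"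
    if w: "w \<in> SS n M i" for w
  proof -
    have a: "w (1 - i) = M \<or> w (1 - i) = -(M^2)"
    proof -
      have "1 - i < 2" "1 - i \<noteq> i" using assms(1) by (auto simp: less_2_cases_iff)
      then show ?thesis using w_big[OF w] by blast
    qed
    show ?thesis using a P5[OF assms w] lt2_iff[OF assms w, of M] lt2_iff[OF assms w, of "-(M^2)"]
      mk_distinct[OF assms] dv by auto
  qed
  then have "(\<Sum>w\<in>SS n M i. fstar n M (w(i:=1))) =
     (\<Sum>w\<in>SS n M i. (if w = mk i M then 1 else 0) + (if w = mk i (-(M^2)) then 1 else 0))"
    by (intro sum.cong) auto
  also have "\<dots> = 2" using mk_in[OF Bg_simps(1), of i] mk_in[OF Bg_simps(2), of i] fin_SS
    by (simp add: sum.distrib)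
  finally show ?thesis .
qed


definition ee :: "nat \<Rightarrow> nat \<Rightarrow> nat \<Rightarrow> real" where
  "ee i m = (\<lambda>j. if j \<in> {..<n} - {i} then (if j < 2 then M else if j = m then -1 else 1) else undefined)"

definition AA :: "nat \<Rightarrow> (nat \<Rightarrow> real) set" where
  "AA i = {w\<in>SS n M i. w (1 - i) = M \<and> kk n w i = 1}"

lemma ee_in: "ee i m \<in> SS n M i"
  unfolding SS_def PiE_iff extensional_def by (auto simp: ee_def supp_def Sm_def Bg_def)

lemma ee_kk:
  assumes "i < 2" "m \<in> {2..<n}"
  shows "kk n (ee i m) i = 1"
proof -
  have "kk n (ee i m) i = (\<Sum>j\<in>{2..<n} - {i}. if j = m then 1 else 0)"
    unfolding kk_def by (intro sum.cong) (auto simp: ee_def)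
  also have "\<dots> = 1" using assms by simp
  finally show ?thesis .
qed

lemma card_AA:
  assumes "i < 2"
  shows "card (AA i) = n - 2"
proof -
  have oi: "1 - i < 2" "1 - i \<noteq> i" "1 - i < n" using assms n3 by (auto simp: less_2_cases_iff)
  have "bij_betw (ee i) {2..<n} (AA i)"
  proof (rule bij_betw_imageI)
    show "inj_on (ee i) {2..<n}"
    proof
      fix a b assume ab: "a \<in> {2..<n}" "b \<in> {2..<n}" "ee i a = ee i b"
      show "a = b"
      proof (rule ccontr)
        assume "a \<noteq> b"
        then have "ee i a a = -1" "ee i b a = 1" using ab(1,2) assms by (auto simp: ee_def)
        then show False using ab(3) by simp
      qed
    qed
    show "ee i ` {2..<n} = AA i"
    proof
      show "ee i ` {2..<n} \<subseteq> AA i"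
      proof
        fix x assume "x \<in> ee i ` {2..<n}"
        then obtain m where m: "m \<in> {2..<n}" "x = ee i m" by blast
        have "ee i m (1 - i) = M" using oi unfolding ee_def by simp
        then show "x \<in> AA i" using m ee_in ee_kk[OF assms m(1)] unfolding AA_def by simp
      qed
      show "AA i \<subseteq> ee i ` {2..<n}"
      proof
        fix w assume w: "w \<in> AA i"
        then have "card {j\<in>{2..<n} - {i}. w j = -1} = 1" by (simp add: AA_def kk_card)
        then obtain m where m: "{j\<in>{2..<n} - {i}. w j = -1} = {m}" by (rule card_1_singletonE)
        then have mr: "m \<in> {2..<n}" by auto
        have "w = ee i m"
        proof
          fix j
          show "w j = ee i m j"
          proof (cases "j \<in> {..<n} - {i}")
            case True
            show ?thesis
            proof (cases "j < 2")
              case True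
              then have "j = 1 - i" using lt2_other[OF assms] \<open>j \<in> {..<n} - {i}\<close> by auto
              then show ?thesis using w True \<open>j \<in> {..<n} - {i}\<close> by (auto simp: AA_def ee_def)
            next
              case False
              then have "w j \<in> Sm" using SS_mem[of w n M i j] w \<open>j \<in> {..<n} - {i}\<close> by (auto simp: supp_def AA_def)
              moreover have "w j = -1 \<longleftrightarrow> j = m"
              proof -
                have "j \<in> {j\<in>{2..<n} - {i}. w j = -1} \<longleftrightarrow> j \<in> {m}" using m by simp
                then show ?thesis using False \<open>j \<in> {..<n} - {i}\<close> by auto
              qed
              moreover have "ee i m j = (if j = m then -1 else 1)" using False \<open>j \<in> {..<n} - {i}\<close> by (simp add: ee_def)
              ultimately show ?thesis unfolding Sm_def by (cases "j = m") auto
            qed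
          next
            case False
            then show ?thesis using w by (auto simp: ee_def AA_def SS_def PiE_def extensional_def)
          qed
        qed
        then show "w \<in> ee i ` {2..<n}" using mr by auto
      qed
    qed
  qed
  from bij_betw_same_card[OF this] show ?thesis by simp
qed

lemma sum_lt2_M:
  assumes "i < 2"
  shows "(\<Sum>w\<in>SS n M i. fstar n M (w(i:=M))) = 2"
proof -
  have "fstar n M (w(i:=M)) = (if w = mk i M then 1 else 0) + q * (if w \<in> AA i then 1 else 0)"
    if w: "w \<in> SS n M i" for w
    using P6[OF assms w] lt2_iff[OF assms w, of M] w by (auto simp: AA_def)
  then have "(\<Sum>w\<in>SS n M i. fstar n M (w(i:=M))) =
     (\<Sum>w\<in>SS n M i. (if w = mk i M then 1 else 0) + q * (if w \<in> AA i then 1 else 0))"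
    by (intro sum.cong) auto
  also have "\<dots> = (\<Sum>w\<in>SS n M i. (if w = mk i M then 1 else 0)) + q * (\<Sum>w\<in>SS n M i. (if w \<in> AA i then 1 else 0))"
    by (simp add: sum.distrib sum_distrib_left)
  also have "\<dots> = 2"
  proof -
    have c1: "(\<Sum>w\<in>SS n M i. (if w \<in> AA i then 1 else 0)) = real (card (AA i))"
      using fin_SS by (simp add: AA_def sum.inter_filter[symmetric])
    have c2: "(\<Sum>w\<in>SS n M i. (if w = mk i M then 1 else (0::real))) = 1"
      using mk_in[OF Bg_simps(1), of i] fin_SS by simp
    have p: "real (n - 2) \<noteq> 0" using n3 by simp
    have e: "real (card (AA i)) = real (n - 2)" using card_AA[OF assms] by simp
    have "q * real (n - 2) = 1" using p by (simp del: of_nat_diff)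
    then have "q * real (card (AA i)) = 1" unfolding e .
    then show ?thesis unfolding c1 c2 by (metis one_add_one)
  qed
  finally show ?thesis .
qed


lemma BIC_i:
  assumes "i < n"
  shows "\<forall>vi \<in> Vals M. \<forall>vi' \<in> Vals M. vi * interim n M 0 (fstar n M) i vi \<ge> vi * interim n M 0 (fstar n M) i vi'"
proof -
  define I where "I = interim n M 0 (fstar n M) i"
  define c :: real where "c = (1/2)^(n-1)"
  have cpos: "c > 0" by (simp add: c_def)
  have I: "I x = c * (\<Sum>w\<in>SS n M i. fstar n M (w(i := x)))" for x
    unfolding I_def c_def using interim_red[OF assms Mpos M1] .
  obtain P Q where PQ: "I M = P" "I 1 = P" "I (-1) = Q" "I (-(M^2)) = Q" "Q \<le> P"
  proof (cases "i < 2")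
    case True
    have "I M = c * 2" "I 1 = c * 2" using I sum_lt2_M[OF True] sum_lt2_one[OF True] by auto
    moreover have "I (-1) = 0" "I (-(M^2)) = 0" using I P4[OF True] by auto
    ultimately show ?thesis using that[of "c * 2" 0] cpos by auto
  next
    case False
    then have i2: "2 \<le> i" by simp
    have "I M = I 1" unfolding I using P1[OF i2 assms] by simp
    moreover have "I (-1) = c * q" "I (-(M^2)) = c * q" using I sum_ge2_neg[OF i2 assms] by auto
    moreover have "I 1 \<ge> c * q"
    proof -
      have "(\<Sum>w\<in>SS n M i. fstar n M (w(i:=1))) \<ge> q" using order_trans[OF q_pos(2) sum_ge2_pos[OF i2 assms]] .
      then show ?thesis unfolding I by (rule mult_left_mono[OF _ less_imp_le[OF cpos]])
    qed
    ultimately show ?thesis using that[of "I 1" "c * q"] by auto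
  qed
  show ?thesis unfolding I_def[symmetric]
  proof (intro ballI)
    fix vi vi' assume v: "vi \<in> Vals M" "vi' \<in> Vals M"
    have m2: "M^2 > 0" using Mpos by simp
    have "I vi' = P \<or> I vi' = Q" using v(2) PQ by (auto simp: Vals_def)
    then have "Q \<le> I vi' \<and> I vi' \<le> P" using PQ by auto
    moreover have "(vi < 0 \<and> I vi = Q) \<or> (vi > 0 \<and> I vi = P)" using v(1) PQ Mpos m2 by (auto simp: Vals_def)
    ultimately show "vi * I vi \<ge> vi * I vi'"
      by (auto intro: mult_left_mono mult_left_mono_neg)
  qed
qed

lemma anon: "anonymous n M (fstar n M)"
  unfolding anonymous_def
proof (intro ballI allI impI)
  fix v :: "nat \<Rightarrow> real" and \<pi> assume p: "\<pi> permutes {..<n}"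
  have "cnt n (v \<circ> \<pi>) x = cnt n v x" for x
  proof -
    have "cnt n v x = (\<Sum>j\<in>\<pi> ` {..<n}. if v j = x then 1 else 0)" unfolding cnt_def permutes_image[OF p] ..
    also have "\<dots> = (\<Sum>j<n. if (v \<circ> \<pi>) j = x then 1 else 0)"
      by (subst sum.reindex) (auto intro: permutes_inj_on[OF p])
    finally show ?thesis unfolding cnt_def by simp
  qed
  then show "fstar n M (v \<circ> \<pi>) = fstar n M v" unfolding fstar_def by simp
qed

lemma prof_split:
  assumes "v \<in> PiE {..<n} (supp M)"
  shows "v(0 := undefined) \<in> SS n M 0" "v = (v(0 := undefined))(0 := v 0)" "kk n (v(0 := undefined)) 0 = kk n v 0"
    "v 0 = M \<or> v 0 = -(M^2)" "v 1 = M \<or> v 1 = -(M^2)"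
proof -
  show "v(0 := undefined) \<in> SS n M 0" using assms unfolding SS_def PiE_iff extensional_def by auto
  show "v = (v(0 := undefined))(0 := v 0)" by simp
  show "kk n (v(0 := undefined)) 0 = kk n v 0" unfolding kk_def by (intro sum.cong) auto
  have "v 0 \<in> supp M 0" "v 1 \<in> supp M 1" using assms n3 by (auto simp: PiE_iff)
  then show "v 0 = M \<or> v 0 = -(M^2)" "v 1 = M \<or> v 1 = -(M^2)" by (auto simp: supp_def Bg_def)
qed

lemma fstar_prof:
  assumes "v \<in> PiE {..<n} (supp M)"
  shows "fstar n M v = (if v 0 = M \<and> v 1 = M \<and> kk n v 0 = 0 then 1 else if v 0 = M \<and> v 1 = M \<and> kk n v 0 = 1 then q else 0)"
proof -
  note ps = prof_split[OF assms]
  define w where "w = v(0 := undefined)"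
  have wS: "w \<in> SS n M 0" and kw: "kk n w 0 = kk n v 0" and w1: "w 1 = v 1" using ps unfolding w_def by auto
  show ?thesis
  proof (cases "v 0 = M")
    case True
    then have "v = w(0 := M)" unfolding w_def by auto
    then have "fstar n M v = fstar n M (w(0 := M))" by simp
    also have "\<dots> = (if w 1 = M \<and> kk n w 0 = 0 then 1 else if w 1 = M \<and> kk n w 0 = 1 then q else 0)"
      using P6[OF _ wS] by simp
    finally show ?thesis using True kw w1 by simp
  next
    case False
    then have v0: "v 0 = -(M^2)" using ps by auto
    then have "v = w(0 := -(M^2))" unfolding w_def by auto
    then have "fstar n M v = 0" using P4[OF _ wS] by simp
    then show ?thesis using False by simp
  qed
qed

lemma unan_prof:
  assumes "v \<in> PiE {..<n} (supp M)"
  shows "unanimity n v = (if v 0 = M \<and> v 1 = M \<and> kk n v 0 = 0 then 1 else 0)"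
proof -
  have "card {i \<in> {..<n}. v i > 0} = n \<longleftrightarrow> (\<forall>j<n. v j > 0)"
  proof
    assume "card {i \<in> {..<n}. v i > 0} = n"
    then have "{i \<in> {..<n}. v i > 0} = {..<n}" by (intro card_subset_eq) auto
    then show "\<forall>j<n. v j > 0" by blast
  next
    assume "\<forall>j<n. v j > 0"
    then have "{i \<in> {..<n}. v i > 0} = {..<n}" by auto
    then show "card {i \<in> {..<n}. v i > 0} = n" by simp
  qed
  also have "\<dots> \<longleftrightarrow> (v 0 = M \<and> v 1 = M \<and> kk n v 0 = 0)"
  proof -
    have m2: "M^2 > 0" using Mpos by simp
    have vs: "v j \<in> supp M j" if "j < n" for j using assms that by auto
    have k0: "kk n v 0 = 0 \<longleftrightarrow> (\<forall>j\<in>{2..<n}. v j \<noteq> -1)" unfolding kk_def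
      by (subst sum_eq_0_iff) auto
    have "(\<forall>j<n. v j > 0) \<longleftrightarrow> (v 0 > 0 \<and> v 1 > 0 \<and> (\<forall>j\<in>{2..<n}. v j > 0))"
    proof
      assume "\<forall>j<n. v j > 0" then show "v 0 > 0 \<and> v 1 > 0 \<and> (\<forall>j\<in>{2..<n}. v j > 0)" using n3 by auto
    next
      assume h: "v 0 > 0 \<and> v 1 > 0 \<and> (\<forall>j\<in>{2..<n}. v j > 0)"
      show "\<forall>j<n. v j > 0"
      proof (intro allI impI)
        fix j assume "j < n"
        then consider "j = 0" | "j = 1" | "j \<in> {2..<n}" by fastforce
        then show "v j > 0" using h by cases auto
      qed
    qed
    also have "\<dots> \<longleftrightarrow> (v 0 = M \<and> v 1 = M \<and> (\<forall>j\<in>{2..<n}. v j \<noteq> -1))"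
    proof -
      have "v 0 > 0 \<longleftrightarrow> v 0 = M" "v 1 > 0 \<longleftrightarrow> v 1 = M" using vs[of 0] vs[of 1] n3 m2 Mpos
        by (auto simp: supp_def Bg_def)
      moreover have "v j > 0 \<longleftrightarrow> v j \<noteq> -1" if "j \<in> {2..<n}" for j
        using vs[of j] that by (auto simp: supp_def Sm_def)
      ultimately show ?thesis by auto
    qed
    finally show ?thesis using k0 by simp
  qed
  finally show ?thesis unfolding unanimity_def by simp
qed

lemma sum_prof:
  assumes "v \<in> PiE {..<n} (supp M)"
  shows "(\<Sum>j<n. v j) = v 0 + v 1 + real (n - 2) - 2 * real (kk n v 0)"
proof -
  have s1: "(\<Sum>j<n. v j) = (\<Sum>j\<in>{0..<2}. v j) + (\<Sum>j\<in>{2..<n}. v j)"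
  proof -
    have e: "{..<n} = {0..<2} \<union> {2..<n}" using n3 by auto
    show ?thesis unfolding e by (rule sum.union_disjoint) auto
  qed
  have s2: "(\<Sum>j\<in>{0..<2}. v j) = v 0 + v 1"
  proof -
    have "{0..<2} = {0, 1::nat}" by auto
    then show ?thesis by simp
  qed
  have s3: "(\<Sum>j\<in>{2..<n}. v j) = (\<Sum>j\<in>{2..<n}. 1 - 2 * (if v j = -1 then 1 else 0))"
  proof (intro sum.cong refl)
    fix j assume "j \<in> {2..<n}"
    then have "j \<in> {..<n}" "\<not> j < 2" by auto
    then have "v j \<in> Sm" using PiE_mem[OF assms, of j] by (simp add: supp_def)
    then show "v j = 1 - 2 * (if v j = -1 then 1 else 0)" by (auto simp: Sm_def)
  qed
  have s4: "(\<Sum>j\<in>{2..<n}. 1 - 2 * (if v j = -1 then 1 else 0)) = real (n - 2) - 2 * real (kk n v 0)"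
  proof -
    have "{2..<n} - {0::nat} = {2..<n}" by auto
    then have "real (kk n v 0) = (\<Sum>j\<in>{2..<n}. (if v j = -1 then 1 else 0))"
      unfolding kk_def by (simp add: of_nat_sum) (intro sum.cong, auto)
    moreover have "(\<Sum>j\<in>{2..<n}. 1 - 2 * (if v j = -1 then 1 else 0)) =
        (\<Sum>j\<in>{2..<n}. (1::real)) - 2 * (\<Sum>j\<in>{2..<n}. (if v j = -1 then 1 else 0))"
      by (simp only: sum_subtractf sum_distrib_left)
    moreover have "(\<Sum>j\<in>{2..<n}. (1::real)) = real (n - 2)" by simp
    ultimately show ?thesis by simp
  qed
  show ?thesis unfolding s1 s2 s3 s4 by simp
qed

end


theorem lemma5:
  fixes n :: nat and M :: real
  assumes "n \<ge> 3" and "M > 0"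
    and A: "2 / real n * (-(M^2) + M + real n - 2) + (real n - 2) / real n * (2 * M + real n - 4) < 0"
    and B: "2 * M - (real n - 2) > 0"
  shows "\<exists>f. is_SCF n M f \<and> anonymous n M f \<and> BIC n M 0 f
             \<and> welfare n M 0 f > welfare n M 0 (unanimity n)"
proof -
  note n3 = assms(1) and Mpos = assms(2)
  have M1: "M \<noteq> 1"
  proof
    assume M: "M = 1"
    have "real n \<ge> 3" using n3 by simp
    then have t1: "2 / real n * (real n - 2) \<ge> 0" and t2: "(real n - 2) / real n * (real n - 2) \<ge> 0"
      by simp_all
    have "2 / real n * (-(M^2) + M + real n - 2) + (real n - 2) / real n * (2 * M + real n - 4) =
          2 / real n * (real n - 2) + (real n - 2) / real n * (real n - 2)" using M by simp
    then show False using A t1 t2 by linarith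
  qed
  let ?q = "1 / real (n - 2)"
  let ?S = "PiE {..<n} (supp M)"
  let ?f = "fstar n M"
  have qpos: "?q > 0" using n3 by simp
  have pos: "2 * M + real (n - 2) - 2 > 0" using B n3 by (simp add: of_nat_diff)
  have d: "(?f v - unanimity n v) * (\<Sum>j<n. v j) =
           (if v 0 = M \<and> v 1 = M \<and> kk n v 0 = 1 then ?q * (2 * M + real (n - 2) - 2) else 0)"
    if v: "v \<in> ?S" for v
    using fstar_prof[OF n3 Mpos M1 v] unan_prof[OF n3 Mpos M1 v] sum_prof[OF n3 Mpos M1 v]
    by auto
  define vs where "vs = (\<lambda>j. if j < n then (if j < 2 then M else if j = 2 then -1 else (1::real)) else undefined)"
  have vsS: "vs \<in> ?S" unfolding vs_def PiE_iff extensional_def by (auto simp: supp_def Bg_def Sm_def)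
  have vsk: "kk n vs 0 = 1"
  proof -
    have "kk n vs 0 = (\<Sum>j\<in>{2..<n} - {0}. if j = 2 then 1 else 0)"
      unfolding kk_def by (intro sum.cong) (auto simp: vs_def)
    also have "\<dots> = 1" using n3 by simp
    finally show ?thesis .
  qed
  have vs01: "vs 0 = M" "vs 1 = M" using n3 by (auto simp: vs_def)
  have fin: "finite ?S" by (rule finite_PiE) (auto simp: supp_def Bg_def Sm_def)
  have "0 < (\<Sum>v\<in>?S. (?f v - unanimity n v) * (\<Sum>j<n. v j))"
  proof (rule sum_pos2[OF fin vsS])
    show "0 < (?f vs - unanimity n vs) * (\<Sum>j<n. vs j)"
      using d[OF vsS] vsk vs01 qpos pos by simp
    fix v assume "v \<in> ?S"
    then show "0 \<le> (?f v - unanimity n v) * (\<Sum>j<n. v j)"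
      using d qpos pos by simp
  qed
  moreover have "welfare n M 0 ?f - welfare n M 0 (unanimity n) =
      (1/2)^n * (\<Sum>v\<in>?S. (?f v - unanimity n v) * (\<Sum>j<n. v j))"
    unfolding welfare_red[OF Mpos M1] by (simp add: right_diff_distrib[symmetric] sum_subtractf[symmetric] left_diff_distrib)
  ultimately have W: "welfare n M 0 ?f > welfare n M 0 (unanimity n)"
    by (smt (verit) zero_less_power divide_pos_pos zero_less_one zero_less_two mult_pos_pos)
  have "is_SCF n M ?f" unfolding is_SCF_def using fstar_bounds[OF n3 Mpos M1] by auto
  moreover have "anonymous n M ?f" using anon[OF n3 Mpos M1] .
  moreover have "BIC n M 0 ?f" unfolding BIC_def using BIC_i[OF n3 Mpos M1] by blast
  ultimately show ?thesis using W by blast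
qed

end
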